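(* The map $\omega:(\Xi,d')\to(\Xi,d')$, $\omega([(L,v)])=[(\omega(L),v)]$, is continuous.
   Context: Combinatorial tiling: 2-dimensional CW-complex homeomorphic to the open unit disk. Decorated subdivision: a decorated pentagon has boundary vertices $v_1,\dots,v_5$ in cyclic order (indices mod 5), corner $v_i$ labelled $i$; $\omega$ adds $m_i$ inside edge $v_iv_{i+1}$, interior vertices $c_1,\dots,c_5$, edges $c_ic_{i+1}$, $c_im_i$, and replaces the face by the central pentagon $c_1\cdots c_5$ (label $i+1$ at $c_i$) and petals $v_i\,m_i\,c_i\,c_{i-1}\,m_{i-1}$ labelled $i,i+1,i+2,i+3,i+4$ (mod 5). $K_0$ is one decorated pentagon, $K_n=\omega^n(K_0)$ embeds label-preservingly onto the central superpentagon $\omega^n(\text{central face of }\omega(K_0))$ of $K_{n+1}$, and $K$ is the direct limit. Isomorphisms are cell-preserving label-preserving bijections. A patch is a finite subcomplex that is a union of faces connected through chains of faces sharing edges. $L$ is locally isomorphic to $K$ if every patch of $L$ is isomorphic to a patch of $K$. $\Xi$ is the set of isomorphism classes $[(L,v)]$ with $L$ locally isomorphic to $K$ and $v$ a vertex of $L$; $\omega(L)$ applies $\omega$ to every face of $L$. $B(v,n,L)$ is the subcomplex of faces all of whose vertices are at edge-path distance $\le n$ from $v$. $d'([(L,v)],[(L',v')])=\min(1/n,1)$ with $n$ the greatest radius such that some isomorphism $B(v,n,L)\to B(v',n,L')$ sends $v$ to $v'$ ($d'=0$ if for all $n$). *)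

theory Defs
  imports "HOL-Analysis.Analysis" "HOL-Library.Multiset"
begin

text \<open>A complex is represented by its set of faces.  Every face is a decorated
pentagon, given as the list of its 5 distinct boundary vertices in cyclic order;
the vertex at list position k carries the corner label k+1.  Edges are the pairs
of cyclically consecutive corners of a face.\<close>

type_synonym 'v cplx = "'v list set"

definition pface :: "'v list \<Rightarrow> bool" where
  "pface f \<longleftrightarrow> length f = 5 \<and> distinct f"

definition wf_cplx :: "'v cplx \<Rightarrow> bool" where
  "wf_cplx C \<longleftrightarrow> (\<forall>f\<in>C. pface f)"

definition verts :: "'v cplx \<Rightarrow> 'v set" where
  "verts C = (\<Union>f\<in>C. set f)"

definition fedges :: "'v list \<Rightarrow> 'v set set" where
  "fedges f = {{f ! k, f ! (Suc k mod 5)} | k. k < 5}"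

definition edges :: "'v cplx \<Rightarrow> 'v set set" where
  "edges C = (\<Union>f\<in>C. fedges f)"

definition cplx_iso :: "('a \<Rightarrow> 'b) \<Rightarrow> 'a cplx \<Rightarrow> 'b cplx \<Rightarrow> bool" where
  "cplx_iso \<phi> C D \<longleftrightarrow> inj_on \<phi> (verts C) \<and> (map \<phi>) ` C = D"

definition isomorphic :: "'a cplx \<Rightarrow> 'b cplx \<Rightarrow> bool" where
  "isomorphic C D \<longleftrightarrow> (\<exists>\<phi>. cplx_iso \<phi> C D)"

definition patch :: "'v cplx \<Rightarrow> 'v cplx \<Rightarrow> bool" where
  "patch P L \<longleftrightarrow> P \<subseteq> L \<and> finite P \<and> P \<noteq> {} \<and>
     (\<forall>f\<in>P. \<forall>g\<in>P. (f, g) \<in> ({(a, b). a \<in> P \<and> b \<in> P \<and> fedges a \<inter> fedges b \<noteq> {}})\<^sup>*)"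

text \<open>Vertices of \<omega>(L): old vertices, one midpoint per edge (named by the
multiset of its endpoints), and five interior vertices per face.
For a face f = [v1,...,v5] (v(i) at position i-1), \<open>SCen f i\<close> (i<5) is the
paper's c(i+1) and \<open>SMid {#a,b#}\<close> is the midpoint of edge ab.\<close>

datatype 'v sv = SOld 'v | SMid "'v multiset" | SCen "'v list" nat

definition central :: "'v list \<Rightarrow> 'v sv list" where
  "central f = map (\<lambda>p. SCen f ((p + 4) mod 5)) [0..<5]"

text \<open>Petal at corner v(i+1) (i<5): v(i+1) m(i+1) c(i+1) c(i) m(i), labelled
i+1,...,i+5 (mod 5), placed at the list positions of those labels.\<close>

definition petal :: "'v list \<Rightarrow> nat \<Rightarrow> 'v sv list" where
  "petal f i = rotate (5 - i)
     [SOld (f ! i), SMid {# f ! i, f ! (Suc i mod 5) #}, SCen f i,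
      SCen f ((i + 4) mod 5), SMid {# f ! ((i + 4) mod 5), f ! i #}]"

definition omega :: "'v cplx \<Rightarrow> 'v sv cplx" where
  "omega C = central ` C \<union> {petal f i | f i. f \<in> C \<and> i < 5}"

datatype vtx = Base nat | Sub "vtx sv"

definition omegaK :: "vtx cplx \<Rightarrow> vtx cplx" where
  "omegaK C = map Sub ` omega C"

definition K0face :: "vtx list" where
  "K0face = map Base [0..<5]"

definition Kn :: "nat \<Rightarrow> vtx cplx" where
  "Kn n = (omegaK ^^ n) {K0face}"

text \<open>Embedding K_0 \<rightarrow> K_1 onto the central face of \<omega>(K_0) (label preserving),
and K_n \<rightarrow> K_(n+1) obtained by applying \<omega>^n to it.\<close>

definition j0 :: "vtx \<Rightarrow> vtx" where
  "j0 x = (case x of Base k \<Rightarrow> Sub (SCen K0face ((k + 4) mod 5)) | Sub s \<Rightarrow> x)"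

definition liftj :: "(vtx \<Rightarrow> vtx) \<Rightarrow> vtx \<Rightarrow> vtx" where
  "liftj \<phi> x = (case x of Base k \<Rightarrow> Base k | Sub s \<Rightarrow> Sub (map_sv \<phi> s))"

definition jmap :: "nat \<Rightarrow> vtx \<Rightarrow> vtx" where
  "jmap n = (liftj ^^ n) j0"

primrec Jk :: "nat \<Rightarrow> nat \<Rightarrow> vtx \<Rightarrow> vtx" where
  "Jk n 0 = id"
| "Jk n (Suc k) = jmap (n + k) \<circ> Jk n k"

text \<open>Direct limit: a vertex of K is the class of (n, x), x a vertex of K_n,
under (n,x) ~ (m,y) iff they become equal in some K_N.\<close>

definition dlcls :: "nat \<Rightarrow> vtx \<Rightarrow> (nat \<times> vtx) set" where
  "dlcls n x = {(m, y). \<exists>N. n \<le> N \<and> m \<le> N \<and> Jk n (N - n) x = Jk m (N - m) y}"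

definition K :: "(nat \<times> vtx) set cplx" where
  "K = {map (dlcls n) f | n f. f \<in> Kn n}"

definition loc_iso_K :: "'v cplx \<Rightarrow> bool" where
  "loc_iso_K L \<longleftrightarrow> (\<forall>P. patch P L \<longrightarrow> (\<exists>Q. patch Q K \<and> isomorphic P Q))"

definition pcorner :: "nat \<Rightarrow> complex" where
  "pcorner k = cis (2 * pi * real k / 5)"

definition pentagon :: "complex set" where
  "pentagon = convex hull (pcorner ` {0..<5})"

text \<open>Gluing data: a point on the boundary of face f is named by its position on
the edge (barycentric weights on the endpoint vertices, by arc length); interior
points are named by (face, point).\<close>

definition bweight :: "'v list \<Rightarrow> complex \<Rightarrow> 'v \<Rightarrow> real" where
  "bweight f p =
    (let k = (SOME k. k < 5 \<and> p \<in> closed_segment (pcorner k) (pcorner (Suc k)));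
         t = dist (pcorner k) p / dist (pcorner k) (pcorner (Suc k))
     in (\<lambda>w. (if w = f ! k then 1 - t else 0) + (if w = f ! (Suc k mod 5) then t else 0)))"

definition pkey :: "'v list \<Rightarrow> complex \<Rightarrow> ('v list \<times> complex) + ('v \<Rightarrow> real)" where
  "pkey f p = (if \<exists>k<5. p \<in> closed_segment (pcorner k) (pcorner (Suc k))
               then Inr (bweight f p) else Inl (f, p))"

definition realisation_map :: "'v list \<times> complex \<Rightarrow> ('v list \<times> complex) + ('v \<Rightarrow> real)" where
  "realisation_map = (\<lambda>(f, p). pkey f p)"

text \<open>L is a combinatorial tiling: its CW realisation (quotient of the disjoint
union of closed pentagons by the boundary identifications) is homeomorphic to
the open unit disk.\<close>

definition tiling :: "'v cplx \<Rightarrow> bool" where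
  "tiling L \<longleftrightarrow> wf_cplx L \<and>
     (\<exists>Y. quotient_map (sum_topology (\<lambda>f. top_of_set pentagon) L) Y realisation_map \<and>
          Y homeomorphic_space (top_of_set (ball (0::complex) 1)))"

definition inXi :: "'v cplx \<Rightarrow> 'v \<Rightarrow> bool" where
  "inXi L v \<longleftrightarrow> tiling L \<and> loc_iso_K L \<and> v \<in> verts L"

definition edge_rel :: "'v cplx \<Rightarrow> ('v \<times> 'v) set" where
  "edge_rel L = {(a, b). {a, b} \<in> edges L}"

definition edist_le :: "'v cplx \<Rightarrow> 'v \<Rightarrow> 'v \<Rightarrow> nat \<Rightarrow> bool" where
  "edist_le L v w n \<longleftrightarrow> (v, w) \<in> (Id \<union> edge_rel L) ^^ n"

definition ballc :: "'v \<Rightarrow> nat \<Rightarrow> 'v cplx \<Rightarrow> 'v cplx" where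
  "ballc v n L = {f \<in> L. \<forall>w\<in>set f. edist_le L v w n}"

definition ball_radii :: "'a cplx \<Rightarrow> 'a \<Rightarrow> 'b cplx \<Rightarrow> 'b \<Rightarrow> nat set" where
  "ball_radii L v L' v' = {n. \<exists>\<phi>. cplx_iso \<phi> (ballc v n L) (ballc v' n L') \<and> \<phi> v = v'}"

text \<open>d' = min(1/n, 1) for the greatest admissible radius n (with 1/0 = \<infinity>),
and 0 if every radius is admissible; written as an infimum.\<close>

definition dprime :: "'a cplx \<Rightarrow> 'a \<Rightarrow> 'b cplx \<Rightarrow> 'b \<Rightarrow> real" where
  "dprime L v L' v' = Inf (insert 1 {1 / real n | n. n \<ge> 1 \<and> n \<in> ball_radii L v L' v'})"

end

theory Submission
  imports Defs
begin
lemma U5: "{..<5::nat} = {0,1,2,3,4}" by auto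
lemma fedges_img: "fedges f = (\<lambda>k. {f ! k, f ! (Suc k mod 5)}) ` {..<5}"
  unfolding fedges_def by auto
lemma fedges5: "fedges [a,b,c,d,e] = {{a,b},{b,c},{c,d},{d,e},{e,a}}"
  unfolding fedges_img U5 by (simp add: insert_commute)
lemma petal0: "petal f 0 = [SOld (f!0), SMid {#f!0, f!1#}, SCen f 0, SCen f 4, SMid {#f!4, f!0#}]"
  by (simp add: petal_def)
lemma petal1: "petal f 1 = [SMid {#f!0, f!1#}, SOld (f!1), SMid {#f!1, f!2#}, SCen f 1, SCen f 0]"
  by (simp add: petal_def rotate_drop_take) (simp add: numeral_2_eq_2 numeral_3_eq_3)?
lemma petal2: "petal f 2 = [SCen f 1, SMid {#f!1, f!2#}, SOld (f!2), SMid {#f!2, f!3#}, SCen f 2]"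
  by (simp add: petal_def rotate_drop_take) (simp add: numeral_2_eq_2 numeral_3_eq_3)?
lemma petal3: "petal f 3 = [SCen f 3, SCen f 2, SMid {#f!2, f!3#}, SOld (f!3), SMid {#f!3, f!4#}]"
  by (simp add: petal_def rotate_drop_take) (simp add: numeral_2_eq_2 numeral_3_eq_3)?
lemma petal4: "petal f 4 = [SMid {#f!4, f!0#}, SCen f 4, SCen f 3, SMid {#f!3, f!4#}, SOld (f!4)]"
  by (simp add: petal_def rotate_drop_take) (simp add: numeral_2_eq_2 numeral_3_eq_3)?
lemma central5: "central f = [SCen f 4, SCen f 0, SCen f 1, SCen f 2, SCen f 3]"
    by (simp add: central_def upt_rec)
definition PP :: "'a \<Rightarrow> 'a \<Rightarrow> 'a \<Rightarrow> 'a \<Rightarrow> bool" where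
  "PP x y a b \<longleftrightarrow> (x = a \<and> y = b) \<or> (x = b \<and> y = a)"

definition sube :: "'v list \<Rightarrow> 'v sv \<Rightarrow> 'v sv \<Rightarrow> bool" where
  "sube f x y \<longleftrightarrow> (let P = PP x y in
    P (SCen f 0) (SCen f 1) \<or>
    P (SOld (f!0)) (SMid {#f!0, f!1#}) \<or>
    P (SOld (f!1)) (SMid {#f!0, f!1#}) \<or>
    P (SMid {#f!0, f!1#}) (SCen f 0) \<or>
    P (SCen f 1) (SCen f 2) \<or>
    P (SOld (f!1)) (SMid {#f!1, f!2#}) \<or>
    P (SOld (f!2)) (SMid {#f!1, f!2#}) \<or>
    P (SMid {#f!1, f!2#}) (SCen f 1) \<or>
    P (SCen f 2) (SCen f 3) \<or>
    P (SOld (f!2)) (SMid {#f!2, f!3#}) \<or>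
    P (SOld (f!3)) (SMid {#f!2, f!3#}) \<or>
    P (SMid {#f!2, f!3#}) (SCen f 2) \<or>
    P (SCen f 3) (SCen f 4) \<or>
    P (SOld (f!3)) (SMid {#f!3, f!4#}) \<or>
    P (SOld (f!4)) (SMid {#f!3, f!4#}) \<or>
    P (SMid {#f!3, f!4#}) (SCen f 3) \<or>
    P (SCen f 4) (SCen f 0) \<or>
    P (SOld (f!4)) (SMid {#f!4, f!0#}) \<or>
    P (SOld (f!0)) (SMid {#f!4, f!0#}) \<or>
    P (SMid {#f!4, f!0#}) (SCen f 4))"

lemma fe5: "{x,y} \<in> fedges [a,b,c,d,e] \<longleftrightarrow> PP x y a b \<or> PP x y b c \<or> PP x y c d \<or> PP x y d e \<or> PP x y e a"
  unfolding fedges5 PP_def by (simp add: doubleton_eq_iff)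

lemma lt5: "(i::nat) < 5 \<longleftrightarrow> i = 0 \<or> i = 1 \<or> i = 2 \<or> i = 3 \<or> i = 4" by auto

lemma sube_central: "{x,y} \<in> fedges (central f) \<Longrightarrow> sube f x y"
  unfolding central5 fe5 sube_def Let_def by (auto simp: PP_def)

lemma sube_petal: "i < 5 \<Longrightarrow> {x,y} \<in> fedges (petal f i) \<Longrightarrow> sube f x y"
  unfolding lt5 sube_def Let_def
  by (elim disjE; simp only: petal0 petal1 petal2 petal3 petal4 fe5; auto simp: PP_def add_mset_commute)
lemma ex5: "(\<exists>i<(5::nat). P i) \<longleftrightarrow> P 0 \<or> P 1 \<or> P 2 \<or> P 3 \<or> P 4"
  unfolding lt5 by blast

lemma sube_faces: "sube f x y \<Longrightarrow> {x,y} \<in> fedges (central f) \<or> (\<exists>i<5. {x,y} \<in> fedges (petal f i))"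
  unfolding sube_def Let_def PP_def
  apply (elim disjE conjE)
  apply (simp_all only: ex5 central5 petal0 petal1 petal2 petal3 petal4 fe5)
  apply (simp_all add: PP_def add_mset_commute)
  done
lemma E1: "(x,y) \<in> edge_rel (omega L) \<Longrightarrow> \<exists>f\<in>L. sube f x y"
proof -
  assume "(x,y) \<in> edge_rel (omega L)"
  then obtain g where g: "g \<in> omega L" "{x,y} \<in> fedges g"
    unfolding edge_rel_def edges_def by auto
  from g(1) consider f where "f \<in> L" "g = central f" | f i where "f \<in> L" "i < 5" "g = petal f i"
    unfolding omega_def by blast
  then show ?thesis
  proof cases
    case 1 then show ?thesis using g(2) sube_central by blast
  next
    case 2 then show ?thesis using g(2) sube_petal by blast
  qed
qed

lemma E2: "f \<in> L \<Longrightarrow> sube f x y \<Longrightarrow> (x,y) \<in> edge_rel (omega L)"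
proof -
  assume f: "f \<in> L" and s: "sube f x y"
  have "central f \<in> omega L" "\<And>i. i < 5 \<Longrightarrow> petal f i \<in> omega L"
    using f unfolding omega_def by auto
  with sube_faces[OF s] obtain g where "g \<in> omega L" "{x,y} \<in> fedges g" by blast
  then show ?thesis unfolding edge_rel_def edges_def by auto
qed
lemma mods: "Suc 0 mod 5 = (1::nat)" "Suc 1 mod 5 = (2::nat)" "Suc 2 mod 5 = (3::nat)" "Suc 3 mod 5 = (4::nat)" "Suc 4 mod 5 = (0::nat)"
  by simp_all

lemma tst: "f ! (Suc 1 mod 5) = f ! 2" "f ! (Suc 0 mod 5) = f ! 1" "f ! (Suc 4 mod 5) = f ! 0" "f ! (Suc 3 mod 5) = f ! 4" "f ! (Suc 2 mod 5) = f ! 3"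
  by (simp_all only: mods)

fun anchor :: "'v sv \<Rightarrow> 'v set" where
  "anchor (SOld a) = {a}"
| "anchor (SMid m) = set_mset m"
| "anchor (SCen f j) = {f!j, f!(Suc j mod 5)}"

abbreviation RR :: "'v cplx \<Rightarrow> ('v \<times> 'v) set" where
  "RR L \<equiv> Id \<union> edge_rel L"

lemma Ledge: "f \<in> L \<Longrightarrow> j < 5 \<Longrightarrow> (f!j, f!(Suc j mod 5)) \<in> edge_rel L \<and> (f!(Suc j mod 5), f!j) \<in> edge_rel L"
  unfolding edge_rel_def edges_def fedges_def by (auto simp: insert_commute)

lemma Ladj: assumes "f \<in> L" shows
  "(f!0,f!1) \<in> edge_rel L" "(f!1,f!0) \<in> edge_rel L"
  "(f!1,f!2) \<in> edge_rel L" "(f!2,f!1) \<in> edge_rel L"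
  "(f!2,f!3) \<in> edge_rel L" "(f!3,f!2) \<in> edge_rel L"
  "(f!3,f!4) \<in> edge_rel L" "(f!4,f!3) \<in> edge_rel L"
  "(f!4,f!0) \<in> edge_rel L" "(f!0,f!4) \<in> edge_rel L"
  using Ledge[OF assms, of 0] Ledge[OF assms, of 1] Ledge[OF assms, of 2] Ledge[OF assms, of 3] Ledge[OF assms, of 4]
  unfolding mods by simp_all

lemma anchor_step: assumes "f \<in> L" "sube f y x" "t \<in> anchor x" shows "\<exists>s\<in>anchor y. (s,t) \<in> RR L"
  using assms(2,3) Ladj[OF assms(1)] unfolding sube_def Let_def PP_def
  apply (elim disjE conjE)
  apply (simp_all only: anchor.simps mods)
  apply auto
  done

lemma sube_anchor: "sube f y x \<Longrightarrow> \<exists>i<5. f!i \<in> anchor y"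
  unfolding sube_def Let_def PP_def ex5
  apply (elim disjE conjE)
  apply (simp_all only: anchor.simps mods)
  apply simp_all
  done
lemma pow_mono: "(a,b) \<in> (RR L)^^m \<Longrightarrow> m \<le> n \<Longrightarrow> (a,b) \<in> (RR L)^^n"
proof (induction n)
  case 0 then show ?case by simp
next
  case (Suc n)
  show ?case
  proof (cases "m \<le> n")
    case True
    then have "(a,b) \<in> (RR L)^^n" using Suc by blast
    then show ?thesis by (rule relpow_Suc_I) auto
  next
    case False
    then have "m = Suc n" using Suc by simp
    then show ?thesis using Suc by simp
  qed
qed

lemma anchor_dist: "(SOld v, x) \<in> (RR (omega L))^^d \<Longrightarrow> a \<in> anchor x \<Longrightarrow> (v,a) \<in> (RR L)^^d"
proof (induction d arbitrary: x a)
  case 0 then show ?case by auto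
next
  case (Suc d)
  from Suc.prems(1) obtain y where y: "(SOld v, y) \<in> (RR (omega L))^^d" "(y,x) \<in> RR (omega L)"
    by (auto elim: relpow_Suc_E)
  show ?case
  proof (cases "y = x")
    case True
    then have "(v,a) \<in> (RR L)^^d" using Suc y by blast
    then show ?thesis by (rule pow_mono) simp
  next
    case False
    then have "(y,x) \<in> edge_rel (omega L)" using y(2) by auto
    then obtain f where f: "f \<in> L" "sube f y x" using E1 by blast
    obtain s where s: "s \<in> anchor y" "(s,a) \<in> RR L" using anchor_step[OF f Suc.prems(2)] by blast
    have "(v,s) \<in> (RR L)^^d" using Suc.IH[OF y(1) s(1)] .
    then show ?thesis using s(2) by (rule relpow_Suc_I)
  qed
qed

lemma two: "(a,b) \<in> R \<Longrightarrow> (b,c) \<in> R \<Longrightarrow> (a,c) \<in> R^^2"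
  unfolding numeral_2_eq_2 by (intro relpow_Suc_I) auto

lemma all5: "(\<forall>i<(5::nat). P i) \<longleftrightarrow> P 0 \<and> P 1 \<and> P 2 \<and> P 3 \<and> P 4"
  unfolding lt5 by blast

lemma diam_all: assumes f: "f \<in> L" shows "\<forall>i<5. \<forall>k<5. (f!i, f!k) \<in> (RR L)^^2"
  unfolding all5
  apply (intro conjI)
  subgoal by (rule two[where b="f!0"]) (insert Ladj[OF f], simp_all)
  subgoal by (rule two[where b="f!0"]) (insert Ladj[OF f], simp_all)
  subgoal by (rule two[where b="f!1"]) (insert Ladj[OF f], simp_all)
  subgoal by (rule two[where b="f!4"]) (insert Ladj[OF f], simp_all)
  subgoal by (rule two[where b="f!0"]) (insert Ladj[OF f], simp_all)
  subgoal by (rule two[where b="f!1"]) (insert Ladj[OF f], simp_all)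
  subgoal by (rule two[where b="f!1"]) (insert Ladj[OF f], simp_all)
  subgoal by (rule two[where b="f!1"]) (insert Ladj[OF f], simp_all)
  subgoal by (rule two[where b="f!2"]) (insert Ladj[OF f], simp_all)
  subgoal by (rule two[where b="f!0"]) (insert Ladj[OF f], simp_all)
  subgoal by (rule two[where b="f!1"]) (insert Ladj[OF f], simp_all)
  subgoal by (rule two[where b="f!2"]) (insert Ladj[OF f], simp_all)
  subgoal by (rule two[where b="f!2"]) (insert Ladj[OF f], simp_all)
  subgoal by (rule two[where b="f!2"]) (insert Ladj[OF f], simp_all)
  subgoal by (rule two[where b="f!3"]) (insert Ladj[OF f], simp_all)
  subgoal by (rule two[where b="f!4"]) (insert Ladj[OF f], simp_all)
  subgoal by (rule two[where b="f!2"]) (insert Ladj[OF f], simp_all)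
  subgoal by (rule two[where b="f!3"]) (insert Ladj[OF f], simp_all)
  subgoal by (rule two[where b="f!3"]) (insert Ladj[OF f], simp_all)
  subgoal by (rule two[where b="f!3"]) (insert Ladj[OF f], simp_all)
  subgoal by (rule two[where b="f!4"]) (insert Ladj[OF f], simp_all)
  subgoal by (rule two[where b="f!0"]) (insert Ladj[OF f], simp_all)
  subgoal by (rule two[where b="f!3"]) (insert Ladj[OF f], simp_all)
  subgoal by (rule two[where b="f!4"]) (insert Ladj[OF f], simp_all)
  subgoal by (rule two[where b="f!4"]) (insert Ladj[OF f], simp_all)
  done

lemma diam: "f \<in> L \<Longrightarrow> i < 5 \<Longrightarrow> k < 5 \<Longrightarrow> (f!i, f!k) \<in> (RR L)^^2"
  using diam_all by blast

lemma wf_len: "wf_cplx L \<Longrightarrow> f \<in> L \<Longrightarrow> length f = 5"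
  unfolding wf_cplx_def pface_def by blast

lemma wf_nth: assumes "wf_cplx L" "f \<in> L" "w \<in> set f" shows "\<exists>k<5. w = f!k"
proof -
  obtain k where "k < length f" "f!k = w" using assms(3) by (auto simp: in_set_conv_nth)
  then show ?thesis using wf_len[OF assms(1,2)] by auto
qed

lemma face_ball: assumes "wf_cplx L" "f \<in> L" "i < 5" "(v, f!i) \<in> (RR L)^^M"
  shows "f \<in> ballc v (M+2) L"
proof -
  have "\<forall>w\<in>set f. (v,w) \<in> (RR L)^^(M+2)"
  proof
    fix w assume "w \<in> set f"
    then obtain k where k: "k < 5" "w = f!k" using wf_nth[OF assms(1,2)] by blast
    have "(v,w) \<in> (RR L)^^M O (RR L)^^2" unfolding k(2) by (rule relcompI[OF assms(4) diam[OF assms(2,3) k(1)]])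
    then show "(v,w) \<in> (RR L)^^(M+2)" by (simp only: relpow_add)
  qed
  then show ?thesis unfolding ballc_def edist_le_def using assms(2) by blast
qed
lemma ballc_mono: "m \<le> n \<Longrightarrow> ballc v m L \<subseteq> ballc v n L"
  proof
  fix f assume "m \<le> n" "f \<in> ballc v m L"
  then show "f \<in> ballc v n L" unfolding ballc_def edist_le_def by (auto intro: pow_mono[where m=m and n=n])
qed

definition plist :: "'v list \<Rightarrow> ('v sv \<times> 'v sv) list" where
  "plist f = [(SCen f 0, SCen f 1),
    (SOld (f!0), SMid {#f!0, f!1#}),
    (SOld (f!1), SMid {#f!0, f!1#}),
    (SMid {#f!0, f!1#}, SCen f 0),
    (SCen f 1, SCen f 2),
    (SOld (f!1), SMid {#f!1, f!2#}),
    (SOld (f!2), SMid {#f!1, f!2#}),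
    (SMid {#f!1, f!2#}, SCen f 1),
    (SCen f 2, SCen f 3),
    (SOld (f!2), SMid {#f!2, f!3#}),
    (SOld (f!3), SMid {#f!2, f!3#}),
    (SMid {#f!2, f!3#}, SCen f 2),
    (SCen f 3, SCen f 4),
    (SOld (f!3), SMid {#f!3, f!4#}),
    (SOld (f!4), SMid {#f!3, f!4#}),
    (SMid {#f!3, f!4#}, SCen f 3),
    (SCen f 4, SCen f 0),
    (SOld (f!4), SMid {#f!4, f!0#}),
    (SOld (f!0), SMid {#f!4, f!0#}),
    (SMid {#f!4, f!0#}, SCen f 4)]"

lemma sube_alt: "sube f x y \<longleftrightarrow> (\<exists>p\<in>set (plist f). PP x y (fst p) (snd p))"
  unfolding sube_def plist_def Let_def by simp

lemma plist_map: "length f = 5 \<Longrightarrow> plist (map \<phi> f) = map (\<lambda>p. (map_sv \<phi> (fst p), map_sv \<phi> (snd p))) (plist f)"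
  unfolding plist_def by simp

lemma sube_map: assumes "length f = 5" "sube f y x"
  shows "sube (map \<phi> f) (map_sv \<phi> y) (map_sv \<phi> x)"
proof -
  obtain p where p: "p \<in> set (plist f)" "PP y x (fst p) (snd p)" using assms(2) sube_alt by blast
  have "(map_sv \<phi> (fst p), map_sv \<phi> (snd p)) \<in> set (plist (map \<phi> f))"
    unfolding plist_map[OF assms(1)] set_map by (rule rev_image_eqI[OF p(1)]) simp
  moreover have "PP (map_sv \<phi> y) (map_sv \<phi> x) (map_sv \<phi> (fst p)) (map_sv \<phi> (snd p))"
    using p(2) unfolding PP_def by auto
  ultimately show ?thesis unfolding sube_alt by force
qed

lemma verts_img: "verts (map \<phi> ` A) = \<phi> ` verts A"
  unfolding verts_def by auto

lemma iso_inv: assumes "cplx_iso \<phi> A B" shows "cplx_iso (inv_into (verts A) \<phi>) B A"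
proof -
  have B: "B = map \<phi> ` A" and inj: "inj_on \<phi> (verts A)" using assms unfolding cplx_iso_def by auto
  have vB: "verts B = \<phi> ` verts A" unfolding B by (rule verts_img)
  have i: "inj_on (inv_into (verts A) \<phi>) (verts B)" unfolding vB by (rule inj_on_inv_into) (rule subset_refl)
  have m: "map (inv_into (verts A) \<phi>) (map \<phi> l) = l" if "l \<in> A" for l
  proof -
    have sl: "set l \<subseteq> verts A" using that unfolding verts_def by blast
    show ?thesis unfolding map_map
    proof (rule map_idI)
      fix x assume "x \<in> set l"
      then show "(inv_into (verts A) \<phi> \<circ> \<phi>) x = x" using inv_into_f_f[OF inj] sl by auto
    qed
  qed
  have "map (inv_into (verts A) \<phi>) ` B = A" unfolding B image_image using m by simp
  then show ?thesis using i unfolding cplx_iso_def by blast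
qed

lemma inj_msv: assumes "inj_on \<phi> A" shows "inj_on (map_sv \<phi>) {x. set_sv x \<subseteq> A}"
proof (rule inj_onI)
  fix x y
  assume hx: "x \<in> {x. set_sv x \<subseteq> A}" and hy: "y \<in> {x. set_sv x \<subseteq> A}" and e: "map_sv \<phi> x = map_sv \<phi> y"
  have bk: "map_sv (inv_into A \<phi>) (map_sv \<phi> z) = z" if "set_sv z \<subseteq> A" for z
  proof -
    have "map_sv (inv_into A \<phi>) (map_sv \<phi> z) = map_sv (inv_into A \<phi> \<circ> \<phi>) z" by (rule sv.map_comp)
    also have "\<dots> = map_sv id z"
    proof (rule sv.map_cong0)
      fix a assume "a \<in> set_sv z"
      then have "a \<in> A" using that by blast
      then show "(inv_into A \<phi> \<circ> \<phi>) a = id a" using inv_into_f_f[OF assms] by simp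
    qed
    finally show ?thesis by (simp only: sv.map_id)
  qed
  have "x = map_sv (inv_into A \<phi>) (map_sv \<phi> x)" using bk[of x] hx by simp
  also have "\<dots> = map_sv (inv_into A \<phi>) (map_sv \<phi> y)" using e by (simp only:)
  also have "\<dots> = y" using bk[of y] hy by simp
  finally show "x = y" .
qed
lemma P1:
  assumes wfL: "wf_cplx L" and iso: "cplx_iso \<phi> (ballc v n L) (ballc v' n L')"
    and pv: "\<phi> v = v'" and Mn: "M + 2 \<le> n"
  shows "d \<le> M \<Longrightarrow> (SOld v, x) \<in> (RR (omega L))^^d \<Longrightarrow> (SOld v', map_sv \<phi> x) \<in> (RR (omega L'))^^d"
proof (induction d arbitrary: x)
  case 0
  then have "x = SOld v" by simp
  then show ?case using pv by simp
next
  case (Suc d)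
  from Suc.prems(2) obtain y where y: "(SOld v, y) \<in> (RR (omega L))^^d" "(y,x) \<in> RR (omega L)"
    by (auto elim: relpow_Suc_E)
  have IH: "(SOld v', map_sv \<phi> y) \<in> (RR (omega L'))^^d" using Suc.IH[OF _ y(1)] Suc.prems(1) by simp
  show ?case
  proof (cases "y = x")
    case True
    then show ?thesis using IH pow_mono[where m=d and n="Suc d"] by simp
  next
    case False
    then have "(y,x) \<in> edge_rel (omega L)" using y(2) by auto
    then obtain f where f: "f \<in> L" "sube f y x" using E1 by blast
    obtain i where i: "i < 5" "f!i \<in> anchor y" using sube_anchor[OF f(2)] by blast
    have "(v, f!i) \<in> (RR L)^^d" by (rule anchor_dist[OF y(1) i(2)])
    then have "(v, f!i) \<in> (RR L)^^M" by (rule pow_mono) (use Suc.prems(1) in simp)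
    then have "f \<in> ballc v (M+2) L" by (rule face_ball[OF wfL f(1) i(1)])
    then have fB: "f \<in> ballc v n L" by (rule subsetD[OF ballc_mono[OF Mn]])
    have "map \<phi> f \<in> ballc v' n L'" using iso fB unfolding cplx_iso_def by blast
    then have fL': "map \<phi> f \<in> L'" unfolding ballc_def by blast
    have "sube (map \<phi> f) (map_sv \<phi> y) (map_sv \<phi> x)" by (rule sube_map[OF wf_len[OF wfL f(1)] f(2)])
    then have "(map_sv \<phi> y, map_sv \<phi> x) \<in> edge_rel (omega L')" by (rule E2[OF fL'])
    then show ?thesis using IH by (intro relpow_Suc_I) auto
  qed
qed
lemma omega_cases:
  assumes "g \<in> omega L"
  obtains f where "f \<in> L" "g = central f" | f i where "f \<in> L" "i < 5" "g = petal f i"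
  using assms unfolding omega_def by blast

lemma omega_face_ball:
  assumes wfL: "wf_cplx L" and g: "g \<in> ballc (SOld v) M (omega L)"
  shows "\<exists>f. f \<in> ballc v (M+2) L \<and> (g = central f \<or> (\<exists>i<5. g = petal f i))"
proof -
  have gw: "g \<in> omega L" and gd: "\<And>w. w \<in> set g \<Longrightarrow> (SOld v, w) \<in> (RR (omega L))^^M"
    using g unfolding ballc_def edist_le_def by auto
  from gw show ?thesis
  proof (cases rule: omega_cases)
    case (1 f)
    have "SCen f 0 \<in> set g" unfolding 1(2) central5 by simp
    moreover have "f!0 \<in> anchor (SCen f 0)" by (simp only: anchor.simps) (rule insertI1)
    ultimately have "(v, f!0) \<in> (RR L)^^M" by (intro anchor_dist[OF gd])
    then have "f \<in> ballc v (M+2) L" by (intro face_ball[OF wfL 1(1), of 0]) simp_all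
    then show ?thesis using 1 by blast
  next
    case (2 f i)
    have "SOld (f!i) \<in> set g" unfolding 2(3) petal_def by simp
    moreover have "f!i \<in> anchor (SOld (f!i))" by simp
    ultimately have "(v, f!i) \<in> (RR L)^^M" by (intro anchor_dist[OF gd])
    then have "f \<in> ballc v (M+2) L" by (rule face_ball[OF wfL 2(1) 2(2)])
    then show ?thesis using 2 by blast
  qed
qed

lemma setsv_central: "length f = 5 \<Longrightarrow> x \<in> set (central f) \<Longrightarrow> set_sv x \<subseteq> set f"
  unfolding central5 by auto

lemma setsv_petal: assumes "length f = 5" "i < 5" "x \<in> set (petal f i)" shows "set_sv x \<subseteq> set f"
proof -
  have m: "f!i \<in> set f" "f!(Suc i mod 5) \<in> set f" "f!((i+4) mod 5) \<in> set f"
    using assms(1,2) by (simp_all add: nth_mem)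
  show ?thesis using assms(3) m unfolding petal_def by auto
qed

lemma map_central: "map (map_sv \<phi>) (central f) = central (map \<phi> f)"
  by (simp add: central_def)

lemma map_petal: "length f = 5 \<Longrightarrow> i < 5 \<Longrightarrow> map (map_sv \<phi>) (petal f i) = petal (map \<phi> f) i"
  by (simp add: petal_def rotate_map[symmetric])

lemma P2:
  assumes wfL: "wf_cplx L" and iso: "cplx_iso \<phi> (ballc v n L) (ballc v' n L')"
    and pv: "\<phi> v = v'" and Mn: "M + 2 \<le> n"
    and g: "g \<in> ballc (SOld v) M (omega L)"
  shows "map (map_sv \<phi>) g \<in> ballc (SOld v') M (omega L')"
proof -
  obtain f where f: "f \<in> ballc v (M+2) L" "g = central f \<or> (\<exists>i<5. g = petal f i)"
    using omega_face_ball[OF wfL g] by blast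
  have fB: "f \<in> ballc v n L" using f(1) by (rule subsetD[OF ballc_mono[OF Mn]])
  have fL: "f \<in> L" using fB unfolding ballc_def by blast
  have "map \<phi> f \<in> ballc v' n L'" using iso fB unfolding cplx_iso_def by blast
  then have fL': "map \<phi> f \<in> L'" unfolding ballc_def by blast
  have len: "length f = 5" by (rule wf_len[OF wfL fL])
  have gw: "map (map_sv \<phi>) g \<in> omega L'"
    using f(2)
  proof
    assume "g = central f"
    then show ?thesis using fL' map_central[of \<phi> f] unfolding omega_def by auto
  next
    assume "\<exists>i<5. g = petal f i"
    then obtain i where i: "i < 5" "g = petal f i" by blast
    then show ?thesis using fL' map_petal[OF len i(1), of \<phi>] unfolding omega_def by blast
  qed
  have gd: "\<forall>w\<in>set (map (map_sv \<phi>) g). (SOld v', w) \<in> (RR (omega L'))^^M"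
  proof
    fix w assume "w \<in> set (map (map_sv \<phi>) g)"
    then obtain x where x: "x \<in> set g" "w = map_sv \<phi> x" by auto
    have "(SOld v, x) \<in> (RR (omega L))^^M" using g x(1) unfolding ballc_def edist_le_def by blast
    then show "(SOld v', w) \<in> (RR (omega L'))^^M" unfolding x(2) by (rule P1[OF wfL iso pv Mn le_refl])
  qed
  show ?thesis using gw gd unfolding ballc_def edist_le_def by blast
qed
lemma vert_sub:
  assumes wfL: "wf_cplx L" and g: "g \<in> ballc (SOld v) M (omega L)" and Mn: "M + 2 \<le> n" and x: "x \<in> set g"
  shows "set_sv x \<subseteq> verts (ballc v n L)"
proof -
  obtain f where f: "f \<in> ballc v (M+2) L" "g = central f \<or> (\<exists>i<5. g = petal f i)"
    using omega_face_ball[OF wfL g] by blast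
  have fB: "f \<in> ballc v n L" using f(1) by (rule subsetD[OF ballc_mono[OF Mn]])
  have fL: "f \<in> L" using fB unfolding ballc_def by blast
  have len: "length f = 5" by (rule wf_len[OF wfL fL])
  have "set_sv x \<subseteq> set f"
    using f(2)
  proof
    assume "g = central f"
    then show ?thesis using setsv_central[OF len] x by simp
  next
    assume "\<exists>i<5. g = petal f i"
    then obtain i where i: "i < 5" "g = petal f i" by blast
    then show ?thesis using setsv_petal[OF len i(1)] x by simp
  qed
  also have "set f \<subseteq> verts (ballc v n L)" using fB unfolding verts_def by blast
  finally show ?thesis .
qed

lemma v_in_ball: assumes "wf_cplx L" "v \<in> verts L" "2 \<le> n" shows "v \<in> verts (ballc v n L)"
proof -
  obtain f where f: "f \<in> L" "v \<in> set f" using assms(2) unfolding verts_def by blast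
  obtain k where k: "k < 5" "v = f!k" using wf_nth[OF assms(1) f] by blast
  have "(v, f!k) \<in> (RR L)^^0" using k(2) by simp
  then have "f \<in> ballc v (0+2) L" by (rule face_ball[OF assms(1) f(1) k(1)])
  then have "f \<in> ballc v 2 L" by (simp only: add_0)
  then have "f \<in> ballc v n L" by (rule subsetD[OF ballc_mono[OF assms(3)]])
  then show ?thesis using f(2) unfolding verts_def by blast
qed

lemma radius:
  assumes wfL: "wf_cplx L" and wfL': "wf_cplx L'" and vL: "v \<in> verts L"
    and iso: "cplx_iso \<phi> (ballc v n L) (ballc v' n L')"
    and pv: "\<phi> v = v'" and Mn: "M + 2 \<le> n"
  shows "M \<in> ball_radii (omega L) (SOld v) (omega L') (SOld v')"
proof -
  define B where "B = ballc v n L"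
  define B' where "B' = ballc v' n L'"
  define \<psi> where "\<psi> = inv_into (verts B) \<phi>"
  have injB: "inj_on \<phi> (verts B)" using iso unfolding cplx_iso_def B_def by blast
  have imB: "map \<phi> ` B = B'" using iso unfolding cplx_iso_def B_def B'_def by blast
  have vB'': "verts B' = \<phi> ` verts B" using imB verts_img by metis
  have iso': "cplx_iso \<psi> B' B" unfolding \<psi>_def using iso_inv[OF iso] unfolding B_def B'_def .
  have vB: "v \<in> verts B" unfolding B_def by (rule v_in_ball[OF wfL vL]) (use Mn in simp)
  have pv': "\<psi> v' = v" unfolding \<psi>_def pv[symmetric] by (rule inv_into_f_f[OF injB vB])
  have inj: "inj_on (map_sv \<phi>) (verts (ballc (SOld v) M (omega L)))"
  proof (rule inj_on_subset[OF inj_msv[OF injB]])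
    show "verts (ballc (SOld v) M (omega L)) \<subseteq> {x. set_sv x \<subseteq> verts B}"
    proof
      fix x assume "x \<in> verts (ballc (SOld v) M (omega L))"
      then obtain g where g: "g \<in> ballc (SOld v) M (omega L)" "x \<in> set g" unfolding verts_def by blast
      show "x \<in> {x. set_sv x \<subseteq> verts B}" unfolding B_def using vert_sub[OF wfL g(1) Mn g(2)] by (rule CollectI)
    qed
  qed
  have sub1: "map (map_sv \<phi>) ` ballc (SOld v) M (omega L) \<subseteq> ballc (SOld v') M (omega L')"
    by (rule image_subsetI) (rule P2[OF wfL iso pv Mn])
  have sub2: "ballc (SOld v') M (omega L') \<subseteq> map (map_sv \<phi>) ` ballc (SOld v) M (omega L)"
  proof
    fix g' assume g': "g' \<in> ballc (SOld v') M (omega L')"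
    have a: "map (map_sv \<psi>) g' \<in> ballc (SOld v) M (omega L)"
      by (rule P2[OF wfL' iso'[unfolded B_def B'_def] pv' Mn g'])
    have "map (map_sv \<phi>) (map (map_sv \<psi>) g') = g'"
      unfolding map_map
    proof (rule map_idI)
      fix x assume x: "x \<in> set g'"
      have sx: "set_sv x \<subseteq> verts B'" unfolding B'_def by (rule vert_sub[OF wfL' g' Mn x])
      have "(map_sv \<phi> \<circ> map_sv \<psi>) x = map_sv (\<phi> \<circ> \<psi>) x" by (simp add: sv.map_comp)
      also have "\<dots> = map_sv id x"
      proof (rule sv.map_cong0)
        fix a assume "a \<in> set_sv x"
        then have "a \<in> \<phi> ` verts B" using sx vB'' by blast
        then show "(\<phi> \<circ> \<psi>) a = id a" unfolding \<psi>_def by (simp add: f_inv_into_f)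
      qed
      finally show "(map_sv \<phi> \<circ> map_sv \<psi>) x = x" by (simp only: sv.map_id)
    qed
    then show "g' \<in> map (map_sv \<phi>) ` ballc (SOld v) M (omega L)"
      by (intro rev_image_eqI[OF a]) (simp only:)
  qed
  have "cplx_iso (map_sv \<phi>) (ballc (SOld v) M (omega L)) (ballc (SOld v') M (omega L'))"
    unfolding cplx_iso_def using inj equalityI[OF sub1 sub2] by (rule conjI)
  moreover have "map_sv \<phi> (SOld v) = SOld v'" using pv by simp
  ultimately show ?thesis unfolding ball_radii_def by (intro CollectI exI[of _ "map_sv \<phi>"] conjI)
qed
theorem theoreml:
  fixes L :: "'v cplx" and v :: 'v and \<epsilon> :: real
  assumes "inXi L v" and "\<epsilon> > 0"
  shows "\<exists>\<delta>>0. \<forall>L' v'. inXi L' v' \<and> dprime L v L' v' < \<delta> \<longrightarrow>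
           dprime (omega L) (SOld v) (omega L') (SOld v') < \<epsilon>"
proof -
  obtain m where m: "inverse (real (Suc m)) < \<epsilon>" using reals_Archimedean[OF assms(2)] by blast
  define N where "N = Suc m"
  have N1: "N \<ge> 1" unfolding N_def by simp
  have Ne: "1 / real N < \<epsilon>" using m unfolding N_def by (simp add: inverse_eq_divide)
  have wfL: "wf_cplx L" and vL: "v \<in> verts L" using assms(1) unfolding inXi_def tiling_def by auto
  define \<delta> :: real where "\<delta> = 1 / real (N + 2)"
  have dpos: "\<delta> > 0" unfolding \<delta>_def by simp
  have dlt1: "\<delta> < 1" unfolding \<delta>_def using N1 by simp
  show ?thesis
  proof (intro exI[of _ \<delta>] conjI allI impI dpos)
    fix L' v'
    assume h: "inXi L' v' \<and> dprime L v L' v' < \<delta>"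
    have wfL': "wf_cplx L'" using h unfolding inXi_def tiling_def by auto
    let ?S = "insert 1 {1 / real n | n. n \<ge> 1 \<and> n \<in> ball_radii L v L' v'}"
    have "Inf ?S < \<delta>" using h unfolding dprime_def by blast
    then obtain s where s: "s \<in> ?S" "s < \<delta>" using cInf_lessD[of ?S \<delta>] by blast
    have "s \<noteq> 1" using s(2) dlt1 by auto
    then obtain n where n: "s = 1 / real n" "n \<ge> 1" "n \<in> ball_radii L v L' v'" using s(1) by blast
    have "1 / real n < 1 / real (N + 2)" using s(2) n(1) unfolding \<delta>_def by simp
    moreover have "real n \<ge> 1" using n(2) by simp
    ultimately have "real (N + 2) < real n"
    proof (rule_tac ccontr)
      assume a: "1 / real n < 1 / real (N + 2)" "real n \<ge> 1" and "\<not> real (N + 2) < real n"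
      then have "real n \<le> real (N + 2)" by linarith
      then have "1 / real (N + 2) \<le> 1 / real n" by (rule divide_left_mono) (use a(2) in auto)
      then show False using a(1) by linarith
    qed
    then have Nn: "N + 2 \<le> n" by simp
    obtain \<phi> where \<phi>: "cplx_iso \<phi> (ballc v n L) (ballc v' n L')" "\<phi> v = v'"
      using n(3) unfolding ball_radii_def by blast
    have "N \<in> ball_radii (omega L) (SOld v) (omega L') (SOld v')"
      by (rule radius[OF wfL wfL' vL \<phi>(1) \<phi>(2) Nn])
    then have mem: "1 / real N \<in> insert 1 {1 / real n | n. n \<ge> 1 \<and> n \<in> ball_radii (omega L) (SOld v) (omega L') (SOld v')}"
      using N1 by blast
    have bdd: "bdd_below (insert 1 {1 / real n | n. n \<ge> 1 \<and> n \<in> ball_radii (omega L) (SOld v) (omega L') (SOld v')})"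
      by (rule bdd_belowI[of _ 0]) auto
    have "dprime (omega L) (SOld v) (omega L') (SOld v') \<le> 1 / real N"
      unfolding dprime_def by (rule cInf_lower[OF mem bdd])
    then show "dprime (omega L) (SOld v) (omega L') (SOld v') < \<epsilon>" using Ne by linarith
  qed
qed
end
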